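(* Let $(b_n)_{n\ge0}$ be defined by $b_0=b_1=0$, $b_2=1$ and, for $n\ge3$, \[ b_n \;=\; \tfrac{19}{12}(n+1)-3 \;+\; \binom n2^{-1}\sum_{p=1}^{n}(n-p)\,b_{p-1}. \] Then for all $n\ge4$, \[ b_n=\frac{1}{24n(n-1)(n-2)}\Bigl(57n^4-48n^3H_n-178n^3+144n^2H_n+135n^2-96nH_n-14n+24\Bigr), \] and in particular $b_n\sim\tfrac{19}{8}n$ as $n\to\infty$.
   Context: $H_n=\sum_{k=1}^n1/k$ is the $n$-th harmonic number. (In the paper, $b_n=\mathbb E[\hat C_n]$ is the expected number of key comparisons made by Quickselect with Yaroslavskiy's dual-pivot partitioning to find the minimum of a uniformly random permutation of $n$ distinct keys.) *)

theory Defs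
  imports "HOL-Analysis.Analysis" "HOL-Library.Landau_Symbols"
begin

end

theory Submission imports Defs "HOL-Real_Asymp.Real_Asymp" begin

definition cf :: "real \<Rightarrow> real \<Rightarrow> real" where
 "cf x H = (57 * x ^ 4 - 48 * x ^ 3 * H - 178 * x ^ 3
            + 144 * x ^ 2 * H + 135 * x ^ 2 - 96 * x * H
            - 14 * x + 24) / (24 * x * (x - 1) * (x - 2))"

lemma key:
  fixes x H :: real assumes "x \<ge> 3"
  shows "(x+2)*(x+1)/2 * (cf (x+2) (H + 1/(x+1) + 1/(x+2)) - (19/12*(x+3) - 3))
     - 2 * ((x+1)*x/2 * (cf (x+1) (H + 1/(x+1)) - (19/12*(x+2) - 3)))
     + x*(x-1)/2 * (cf x H - (19/12*(x+1) - 3)) = cf x H"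
proof -
  have "x \<noteq> 0" "x - 1 \<noteq> 0" "x - 2 \<noteq> 0" "x + 1 \<noteq> 0" "x + 2 \<noteq> 0" using assms by auto
  then show ?thesis unfolding cf_def
    apply (simp add: divide_simps)
    apply (simp add: algebra_simps power2_eq_square power3_eq_cube power4_eq_xxxx)
    done
qed

lemma S_step:
  fixes b :: "nat \<Rightarrow> real"
  shows "(\<Sum>j<Suc m. real (Suc m - 1 - j) * b j) = (\<Sum>j<m. real (m - 1 - j) * b j) + (\<Sum>j<m. b j)"
proof -
  have "(\<Sum>j<Suc m. real (Suc m - 1 - j) * b j) = (\<Sum>j<m. real (m - j) * b j)"
    by simp
  also have "\<dots> = (\<Sum>j<m. real (m - 1 - j) * b j + b j)"
    by (intro sum.cong refl) (auto simp: of_nat_diff algebra_simps)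
  finally show ?thesis by (simp add: sum.distrib)
qed

lemma S_diff2:
  fixes b :: "nat \<Rightarrow> real"
  defines "S \<equiv> \<lambda>m. (\<Sum>j<m. real (m - 1 - j) * b j)"
  shows "S (Suc (Suc n)) - 2 * S (Suc n) + S n = b n"
  using S_step[where b=b and m="Suc n"] S_step[where b=b and m=n] unfolding S_def by simp

lemma reidx:
  fixes b :: "nat \<Rightarrow> real"
  shows "(\<Sum>p=1..n. real (n - p) * b (p - 1)) = (\<Sum>j<n. real (n - 1 - j) * b j)"
  by (simp add: sum.atLeast1_atMost_eq)

lemma choose2_real: "real (n choose 2) = real n * (real n - 1) / 2"
proof (induction n)
  case 0 then show ?case by simp
next
  case (Suc n)
  have "(Suc n choose 2) = (n choose 1) + (n choose 2)"
    by (simp add: numeral_2_eq_2)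
  then show ?case using Suc by (simp add: field_simps)
qed

lemma closed:
  fixes b :: "nat \<Rightarrow> real"
  assumes b0: "b 0 = 0" and b1: "b 1 = 0" and b2: "b 2 = 1"
    and rec: "\<And>n. n \<ge> 3 \<Longrightarrow>
      b n = 19/12 * (real n + 1) - 3
            + (1 / real (n choose 2)) * (\<Sum>p=1..n. real (n - p) * b (p - 1))"
  shows "n \<ge> 3 \<Longrightarrow> b n = cf (real n) (harm n)"
proof -
  define S where "S \<equiv> \<lambda>m. (\<Sum>j<m. real (m - 1 - j) * b j)"
  define A where "A \<equiv> \<lambda>m. real m * (real m - 1) / 2 * (b m - (19/12 * (real m + 1) - 3))"
  have AS: "A m = S m" if "m \<ge> 3" for m
  proof -
    have nz: "real m * (real m - 1) / 2 \<noteq> 0" using that by auto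
    have "b m = 19/12 * (real m + 1) - 3 + (1 / (real m * (real m - 1) / 2)) * S m"
      using rec[OF that] unfolding reidx choose2_real S_def by simp
    then show ?thesis unfolding A_def using nz by (simp add: field_simps)
  qed
  have A2: "A (Suc (Suc m)) = b m + 2 * A (Suc m) - A m" if "m \<ge> 3" for m
    using S_diff2[where b=b and n=m] AS[of m] AS[of "Suc m"] AS[of "Suc (Suc m)"] that
    unfolding S_def by simp
  have h3: "harm 3 = (11/6::real)"
    by (simp add: harm_def numeral_3_eq_3)
  have h4: "harm 4 = (25/12::real)"
    by (simp add: harm_def numeral_3_eq_3 eval_nat_numeral atLeastAtMostSuc_conv)
  have b3: "b 3 = 10/3"
    using rec[of 3] b0 b1 b2 by (simp add: numeral_3_eq_3 numeral_2_eq_2 atLeastAtMostSuc_conv)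
  have b4: "b 4 = 61/12"
    using rec[of 4] b0 b1 b2 b3 by (simp add: numeral_3_eq_3 numeral_2_eq_2 eval_nat_numeral atLeastAtMostSuc_conv)
  have both: "b m = cf (real m) (harm m) \<and> b (Suc m) = cf (real (Suc m)) (harm (Suc m))"
    if "m \<ge> 3" for m
    using that
  proof (induction m rule: nat_induct_at_least)
    case base
    then show ?case using b3 b4 h3 h4 by (simp add: cf_def)
  next
    case (Suc m)
    then have IH0: "b m = cf (real m) (harm m)"
      and IH1: "b (Suc m) = cf (real m + 1) (harm m + 1/(real m + 1))"
      by (auto simp: harm_Suc field_simps)
    let ?x = "real m" and ?H = "harm m :: real"
    have x3: "?x \<ge> 3" using Suc by simp
    have hS2: "harm (Suc (Suc m)) = ?H + 1/(?x+1) + 1/(?x+2)"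
      by (simp add: harm_Suc field_simps)
    have eq: "A (Suc (Suc m)) = b m + 2 * A (Suc m) - A m" using A2 Suc by simp
    have K: "(?x+2)*(?x+1)/2 * (cf (?x+2) (?H + 1/(?x+1) + 1/(?x+2)) - (19/12*(?x+3) - 3))
        = b m + 2 * A (Suc m) - A m"
      using key[OF x3, of ?H] unfolding A_def IH0 IH1 by (simp add: algebra_simps)
    have nz: "(?x+2)*(?x+1)/2 \<noteq> 0" by (simp add: add_nonneg_eq_0_iff)
    have "(?x+2)*(?x+1)/2 * (b (Suc (Suc m)) - (19/12*(?x+3) - 3))
        = (?x+2)*(?x+1)/2 * (cf (?x+2) (?H + 1/(?x+1) + 1/(?x+2)) - (19/12*(?x+3) - 3))"
    proof -
      have L: "A (Suc (Suc m)) = (?x+2)*(?x+1)/2 * (b (Suc (Suc m)) - (19/12*(?x+3) - 3))"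
        unfolding A_def by (simp add: algebra_simps)
      show ?thesis using L eq K by linarith
    qed
    then have "b (Suc (Suc m)) = cf (?x+2) (?H + 1/(?x+1) + 1/(?x+2))"
      using nz by simp
    then show ?case using IH1 hS2 by (simp add: harm_Suc field_simps)
  qed
  then show "n \<ge> 3 \<Longrightarrow> b n = cf (real n) (harm n)" by blast
qed

lemma asy:
  fixes b :: "nat \<Rightarrow> real"
  assumes ev: "\<And>n. n \<ge> 3 \<Longrightarrow> b n = cf (real n) (harm n)"
  shows "b \<sim>[at_top] (\<lambda>n. 19/8 * real n)"
proof (rule asymp_equivI')
  define P where "P = (\<lambda>n::nat. (57 * real n ^ 4 - 178 * real n ^ 3 + 135 * real n ^ 2 - 14 * real n + 24)
      / (24 * real n * (real n - 1) * (real n - 2)) / (19/8 * real n))"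
  define R where "R = (\<lambda>n::nat. (- 48 * real n ^ 3 + 144 * real n ^ 2 - 96 * real n)
      / (24 * real n * (real n - 1) * (real n - 2)) / (19/8 * real n))"
  have e1: "eventually (\<lambda>n. P n + ln (real n) * R n + (harm n - ln (real n)) * R n = b n / (19/8 * real n)) at_top"
    using eventually_ge_at_top[of 3]
  proof eventually_elim
    case (elim n)
    have "real n \<ge> 3" using elim by simp
    then have "real n \<noteq> 0" "real n - 1 \<noteq> 0" "real n - 2 \<noteq> 0" by auto
    then show ?case unfolding ev[OF elim] P_def R_def cf_def
      by (simp add: divide_simps) (simp add: algebra_simps)
  qed
  have l1: "(\<lambda>n. P n + ln (real n) * R n) \<longlonglongrightarrow> 1"
    unfolding P_def R_def by real_asymp
  have l2: "R \<longlonglongrightarrow> 0"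
    unfolding R_def by real_asymp
  have l3: "(\<lambda>n. (harm n - ln (real n)) * R n) \<longlonglongrightarrow> euler_mascheroni * 0"
    by (intro tendsto_mult euler_mascheroni_LIMSEQ l2)
  have "(\<lambda>n. P n + ln (real n) * R n + (harm n - ln (real n)) * R n) \<longlonglongrightarrow> 1 + euler_mascheroni * 0"
    by (intro tendsto_add l1 l3)
  then have "(\<lambda>n. P n + ln (real n) * R n + (harm n - ln (real n)) * R n) \<longlonglongrightarrow> 1" by simp
  then show "((\<lambda>n. b n / (19/8 * real n)) \<longlongrightarrow> 1) at_top"
    using e1 by (rule Lim_transform_eventually)
qed

theorem proposition5p3:
  fixes b :: "nat \<Rightarrow> real"
  assumes b0: "b 0 = 0" and b1: "b 1 = 0" and b2: "b 2 = 1"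
    and rec: "\<And>n. n \<ge> 3 \<Longrightarrow>
      b n = 19/12 * (real n + 1) - 3
            + (1 / real (n choose 2)) * (\<Sum>p=1..n. real (n - p) * b (p - 1))"
  shows "(\<forall>n\<ge>4. b n = (57 * real n ^ 4 - 48 * real n ^ 3 * harm n - 178 * real n ^ 3
            + 144 * real n ^ 2 * harm n + 135 * real n ^ 2 - 96 * real n * harm n
            - 14 * real n + 24) / (24 * real n * (real n - 1) * (real n - 2)))
         \<and> b \<sim>[at_top] (\<lambda>n. 19/8 * real n)"
proof
  have c: "\<And>n. n \<ge> 3 \<Longrightarrow> b n = cf (real n) (harm n)"
    using closed[OF b0 b1 b2 rec] by blast
  show "\<forall>n\<ge>4. b n = (57 * real n ^ 4 - 48 * real n ^ 3 * harm n - 178 * real n ^ 3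
            + 144 * real n ^ 2 * harm n + 135 * real n ^ 2 - 96 * real n * harm n
            - 14 * real n + 24) / (24 * real n * (real n - 1) * (real n - 2))"
    using c by (simp add: cf_def)
  show "b \<sim>[at_top] (\<lambda>n. 19/8 * real n)" using asy[OF c] by blast
qed

end
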